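(* Let $\phi\in\,]0,\pi[$, $M\in\mathbb{R}$, $N>0$. Let $\Sigma$ be the Keplerian branch around ${\rm O}$ in the plane ${\rm O}xy$ with equation $r=My+N$. Consider the affine map $(x_1,y_1)\mapsto(x_3,y_3)$ defined by $x_1=x_3-M\frac{\cos\phi}{\sin\phi}y_3-N\cos\phi$, $y_1=\frac{1}{\sin\phi}y_3$. Then the image of $\Sigma$ by this map is the Keplerian branch around ${\rm O}$ with equation $r=x\cos\phi+yM\sin\phi+N\sin^2\phi$.
   Context: In the Euclidean plane ${\rm O}xy$, $r=\sqrt{x^2+y^2}$. A Keplerian branch around ${\rm O}$ is the image of a solution of Newton's system $\ddot q=-q/\|q\|^3$ (extended through collisions by bouncing back along the same ray with the same energy). For $\gamma>0$, the set of points satisfying $r=\alpha x+\beta y+\gamma$ is an (irreducible) Keplerian branch around ${\rm O}$, and every nonrectilinear Keplerian branch is of this form. *)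

theory Defs
  imports Complex_Main
begin

text \<open>For gamma > 0 this is exactly a (nonrectilinear)
  Keplerian branch around O (standing fact from the paper's context).\<close>
definition kepler_curve :: "real \<Rightarrow> real \<Rightarrow> real \<Rightarrow> (real \<times> real) set" where
  "kepler_curve \<alpha> \<beta> \<gamma> = {(x, y). sqrt (x\<^sup>2 + y\<^sup>2) = \<alpha> * x + \<beta> * y + \<gamma>}"

end

theory Submission
  imports Defs
begin

lemma sq_eq_iff: "s > 0 \<Longrightarrow> c\<^sup>2 + s\<^sup>2 = 1 \<Longrightarrow>
   ((x - c*R)\<^sup>2 + (y/s)\<^sup>2 = R\<^sup>2) = (x\<^sup>2 + y\<^sup>2 = (c*x + s\<^sup>2*R)\<^sup>2)" for s c x y R :: real
proof -
  assume s: "s > 0" and cs: "c\<^sup>2 + s\<^sup>2 = 1"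
  have "((x - c*R)\<^sup>2 + (y/s)\<^sup>2 = R\<^sup>2) = (s\<^sup>2*((x - c*R)\<^sup>2 + (y/s)\<^sup>2) = s\<^sup>2*R\<^sup>2)"
    using s by simp
  also have "s\<^sup>2*((x - c*R)\<^sup>2 + (y/s)\<^sup>2) = s\<^sup>2*(x - c*R)\<^sup>2 + y\<^sup>2"
    using s by (simp add: field_simps power2_eq_square)
  also have "(s\<^sup>2*(x - c*R)\<^sup>2 + y\<^sup>2 = s\<^sup>2*R\<^sup>2) = (x\<^sup>2 + y\<^sup>2 = (c*x + s\<^sup>2*R)\<^sup>2)"
  proof -
    have "(c*x + s\<^sup>2*R)\<^sup>2 - (x\<^sup>2 + y\<^sup>2) = s\<^sup>2*R\<^sup>2 - (s\<^sup>2*(x - c*R)\<^sup>2 + y\<^sup>2) + (c\<^sup>2 + s\<^sup>2 - 1)*(x\<^sup>2 + s\<^sup>2*R\<^sup>2)"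
      by (simp add: power2_eq_square algebra_simps)
    then have "(c*x + s\<^sup>2*R)\<^sup>2 - (x\<^sup>2 + y\<^sup>2) = s\<^sup>2*R\<^sup>2 - (s\<^sup>2*(x - c*R)\<^sup>2 + y\<^sup>2)"
      using cs by simp
    then show ?thesis by linarith
  qed
  finally show ?thesis .
qed

lemma sign_part: "s > 0 \<Longrightarrow> c\<^sup>2 + s\<^sup>2 = 1 \<Longrightarrow> (x - c*R)\<^sup>2 \<le> R\<^sup>2 \<Longrightarrow>
   (R \<ge> 0) = (c*x + s\<^sup>2*R \<ge> 0)" for s c x R :: real
proof -
  assume s: "s > 0" and cs: "c\<^sup>2 + s\<^sup>2 = 1" and q: "(x - c*R)\<^sup>2 \<le> R\<^sup>2"
  have ab: "\<bar>x - c*R\<bar> \<le> \<bar>R\<bar>" using q by (simp only: abs_le_square_iff)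
  have c1: "\<bar>c\<bar> < 1"
  proof -
    have "s\<^sup>2 > 0" using s by simp
    then have "c\<^sup>2 < 1" using cs by linarith
    then show ?thesis by (simp add: abs_square_less_1)
  qed
  have m: "\<bar>c\<bar>*\<bar>x - c*R\<bar> \<le> \<bar>c\<bar>*\<bar>R\<bar>"
    using ab by (intro mult_left_mono) auto
  have e2: "\<bar>c*x - c*c*R\<bar> = \<bar>c\<bar>*\<bar>x - c*R\<bar>"
    by (simp add: abs_mult[symmetric] algebra_simps)
  have eq: "c*x + s\<^sup>2*R = (c*x - c*c*R) + R"
  proof -
    have "c*c + s\<^sup>2 = 1" using cs by (simp add: power2_eq_square)
    then have "R*(c*c + s\<^sup>2) = R" by simp
    then have "R*(c*c) + R*s\<^sup>2 = R" by (simp only: distrib_left)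
    then show ?thesis by (simp add: algebra_simps)
  qed
  have lt: "\<bar>c\<bar>*\<bar>R\<bar> < \<bar>R\<bar>" if "R \<noteq> 0"
  proof -
    have "\<bar>R\<bar> > 0" using that by simp
    then show ?thesis using c1 by simp
  qed
  show ?thesis
  proof (cases "R = 0")
    case True
    then have "x = 0" using ab by simp
    then show ?thesis using True by simp
  next
    case False
    have "\<bar>c*x - c*c*R\<bar> < \<bar>R\<bar>" using m e2 lt[OF False] by linarith
    then show ?thesis unfolding eq using False by (cases "R \<ge> 0") (simp_all add: abs_less_iff)
  qed
qed

lemma sqrt_eq': "a \<ge> 0 \<Longrightarrow> (sqrt a = b) = (b \<ge> 0 \<and> a = b\<^sup>2)" for a b :: real
  by auto

lemma key: "s > 0 \<Longrightarrow> c\<^sup>2 + s\<^sup>2 = 1 \<Longrightarrow>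
   (sqrt ((x - c*R)\<^sup>2 + (y/s)\<^sup>2) = R) = (sqrt (x\<^sup>2 + y\<^sup>2) = c*x + s\<^sup>2*R)" for s c x y R :: real
proof -
  assume s: "s > 0" and cs: "c\<^sup>2 + s\<^sup>2 = 1"
  have L: "(sqrt ((x - c*R)\<^sup>2 + (y/s)\<^sup>2) = R) = (R \<ge> 0 \<and> (x - c*R)\<^sup>2 + (y/s)\<^sup>2 = R\<^sup>2)"
    by (rule sqrt_eq') simp
  have Rr: "(sqrt (x\<^sup>2 + y\<^sup>2) = c*x + s\<^sup>2*R) = (c*x + s\<^sup>2*R \<ge> 0 \<and> x\<^sup>2 + y\<^sup>2 = (c*x + s\<^sup>2*R)\<^sup>2)"
    by (rule sqrt_eq') simp
  have S: "((x - c*R)\<^sup>2 + (y/s)\<^sup>2 = R\<^sup>2) = (x\<^sup>2 + y\<^sup>2 = (c*x + s\<^sup>2*R)\<^sup>2)"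
    by (rule sq_eq_iff[OF s cs])
  show ?thesis
  proof (cases "(x - c*R)\<^sup>2 + (y/s)\<^sup>2 = R\<^sup>2")
    case True
    have "(x - c*R)\<^sup>2 \<le> R\<^sup>2"
    proof -
      have "0 \<le> (y/s)\<^sup>2" by simp
      then show ?thesis using True by linarith
    qed
    then have "(R \<ge> 0) = (c*x + s\<^sup>2*R \<ge> 0)" by (rule sign_part[OF s cs])
    then show ?thesis unfolding L Rr using S True by blast
  next
    case False
    then show ?thesis unfolding L Rr using S by blast
  qed
qed

theorem lemma6:
  fixes \<phi> M N :: real
  assumes "0 < \<phi>" and "\<phi> < pi" and "N > 0"
  shows "{(x3, y3). \<exists>(x1, y1) \<in> kepler_curve 0 M N.
            x1 = x3 - M * (cos \<phi> / sin \<phi>) * y3 - N * cos \<phi> \<and> y1 = (1 / sin \<phi>) * y3}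
         = kepler_curve (cos \<phi>) (M * sin \<phi>) (N * (sin \<phi>)\<^sup>2)"
proof -
  let ?s = "sin \<phi>" and ?c = "cos \<phi>"
  have s: "?s > 0" using assms by (simp add: sin_gt_zero)
  have cs: "?c\<^sup>2 + ?s\<^sup>2 = 1" by (simp add: add.commute)
  have pt: "(sqrt ((x3 - M * (?c / ?s) * y3 - N * ?c)\<^sup>2 + ((1 / ?s) * y3)\<^sup>2) = M * ((1 / ?s) * y3) + N)
     = (sqrt (x3\<^sup>2 + y3\<^sup>2) = ?c * x3 + M * ?s * y3 + N * ?s\<^sup>2)" for x3 y3
  proof -
    let ?R = "M * ((1 / ?s) * y3) + N"
    have 1: "x3 - M * (?c / ?s) * y3 - N * ?c = x3 - ?c * ?R" by (simp add: algebra_simps)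
    have 2: "(1 / ?s) * y3 = y3 / ?s" by simp
    have 3: "?c * x3 + M * ?s * y3 + N * ?s\<^sup>2 = ?c * x3 + ?s\<^sup>2 * ?R"
      using s by (simp add: field_simps power2_eq_square)
    show ?thesis unfolding 1 3 by (subst 2, rule key[OF s cs])
  qed
  show ?thesis
    unfolding kepler_curve_def using pt by (auto simp del: One_nat_def)
qed

end
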